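(* Let $\lambda_0,\lambda\in\{-1,0,1\}$. Let $M_0$ be a Riemann surface of constant Gauss curvature $K_0=-\lambda_0$ with local complex coordinate $z$, complexified coframe $e_0=\frac{2\,dz}{1+K_0|z|^2}$, spin connection $\Gamma_0=iK_0\frac{z\,d\bar z-\bar z\,dz}{1+K_0|z|^2}$ and Kähler form $\omega_0=\frac{i}{2}e_0\wedge\bar e_0$; let $M$ be a Riemann surface of constant Gauss curvature $K=-\lambda$ with coframe $e$, spin connection $\Gamma$ given by the same formulas with $K$ in place of $K_0$, and let $\hat A=-\Gamma t_0+\frac i2(e\,t_--\bar e\,t_+)$. Let $f:M_0\to M$ be holomorphic, and define a complex function $\phi$ and a real one-form $a$ on $M_0$ by $f^*e=\phi\, e_0$ and $a=f^*\Gamma-\Gamma_0$. Then $$f^*\hat A=-(a+\Gamma_0)\,t_0+\frac{i}{2}\left(\phi\, e_0\, t_- -\bar\phi\,\bar e_0\, t_+\right),$$ and, for a complex function $\phi$ and real one-form $a$ on $M_0$, the $\mathrm{Lie}(\mathbb{H}^1_\lambda)$-valued connection $-(a+\Gamma_0)t_0+\frac{i}{2}(\phi e_0 t_--\bar\phi\bar e_0 t_+)$ is flat if and only if $(\phi,a)$ satisfies the $(\lambda_0,\lambda)$ vortex equations $$(d\phi-ia\phi)\wedge e_0=0,\qquad da=(\lambda_0-\lambda|\phi|^2)\,\omega_0 .$$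
   Context: $\mathbb{H}^1_\lambda$ is the matrix group $\left\{\begin{pmatrix} z_1&\lambda\bar z_2\\ z_2&\bar z_1\end{pmatrix}: |z_1|^2-\lambda|z_2|^2=1\right\}$ with Lie algebra basis $t_0=-\frac{i}{2}\begin{pmatrix}1&0\\0&-1\end{pmatrix}$, $t_1=-\frac{i}{2}\begin{pmatrix}0&-\lambda\\1&0\end{pmatrix}$, $t_2=\frac12\begin{pmatrix}0&\lambda\\1&0\end{pmatrix}$, $t_\pm=t_1\pm it_2$. Flatness of a Lie-algebra-valued one-form $B$ means $dB+B\wedge B=0$. *)

theory Defs
  imports "HOL-Analysis.Analysis"
begin

text \<open>A Riemann surface of constant curvature K is represented by a
coordinate patch (open subset of the complex plane, coordinate z = x + i y) on which
1 + K |z|^2 > 0.  A one-form with values in a real vector space 'a is represented by its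
pair of coefficient functions (dx-coefficient, dy-coefficient); a two-form by its
dx/\dy-coefficient.\<close>

type_synonym 'a form1 = "complex \<Rightarrow> 'a \<times> 'a"
type_synonym 'a form2 = "complex \<Rightarrow> 'a"

definition pdx :: "(complex \<Rightarrow> 'a::real_normed_vector) \<Rightarrow> complex \<Rightarrow> 'a" where
  "pdx g z = frechet_derivative g (at z) 1"
definition pdy :: "(complex \<Rightarrow> 'a::real_normed_vector) \<Rightarrow> complex \<Rightarrow> 'a" where
  "pdy g z = frechet_derivative g (at z) \<i>"

definition dfun :: "(complex \<Rightarrow> 'a::real_normed_vector) \<Rightarrow> 'a form1" where
  "dfun g z = (pdx g z, pdy g z)"
definition dform :: "('a::real_normed_vector) form1 \<Rightarrow> 'a form2" where
  "dform \<omega> z = pdx (\<lambda>w. snd (\<omega> w)) z - pdy (\<lambda>w. fst (\<omega> w)) z"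

definition wedge :: "complex form1 \<Rightarrow> complex form1 \<Rightarrow> complex form2" where
  "wedge \<omega> \<eta> z = fst (\<omega> z) * snd (\<eta> z) - snd (\<omega> z) * fst (\<eta> z)"
definition mwedge :: "(complex^2^2) form1 \<Rightarrow> (complex^2^2) form1 \<Rightarrow> (complex^2^2) form2" where
  "mwedge \<omega> \<eta> z = fst (\<omega> z) ** snd (\<eta> z) - snd (\<omega> z) ** fst (\<eta> z)"

definition flat_at :: "(complex^2^2) form1 \<Rightarrow> complex \<Rightarrow> bool" where
  "flat_at B z \<longleftrightarrow> dform B z + mwedge B B z = 0"

definition fscale :: "(complex \<Rightarrow> complex) \<Rightarrow> complex form1 \<Rightarrow> complex form1" where
  "fscale c \<omega> z = (c z * fst (\<omega> z), c z * snd (\<omega> z))"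
definition fadd :: "complex form1 \<Rightarrow> complex form1 \<Rightarrow> complex form1" where
  "fadd \<omega> \<eta> z = (fst (\<omega> z) + fst (\<eta> z), snd (\<omega> z) + snd (\<eta> z))"
definition fsub :: "complex form1 \<Rightarrow> complex form1 \<Rightarrow> complex form1" where
  "fsub \<omega> \<eta> z = (fst (\<omega> z) - fst (\<eta> z), snd (\<omega> z) - snd (\<eta> z))"
definition fconj :: "complex form1 \<Rightarrow> complex form1" where
  "fconj \<omega> z = (cnj (fst (\<omega> z)), cnj (snd (\<omega> z)))"
definition cform :: "real form1 \<Rightarrow> complex form1" where
  "cform a z = (complex_of_real (fst (a z)), complex_of_real (snd (a z)))"

definition dz_form :: "complex form1" where "dz_form z = (1, \<i>)"
definition dzbar_form :: "complex form1" where "dzbar_form z = (1, - \<i>)"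

definition coframe :: "real \<Rightarrow> complex form1" where
  "coframe K = fscale (\<lambda>z. 2 / complex_of_real (1 + K * (cmod z)^2)) dz_form"
definition spin :: "real \<Rightarrow> complex form1" where
  "spin K = fscale (\<lambda>z. \<i> * complex_of_real K / complex_of_real (1 + K * (cmod z)^2))
              (fsub (fscale (\<lambda>z. z) dzbar_form) (fscale (\<lambda>z. cnj z) dz_form))"
definition kahler :: "real \<Rightarrow> complex form2" where
  "kahler K z = (\<i> / 2) * wedge (coframe K) (fconj (coframe K)) z"

definition pullback :: "(complex \<Rightarrow> complex) \<Rightarrow> ('a::real_vector) form1 \<Rightarrow> 'a form1" where
  "pullback f \<omega> z =
     (pdx (\<lambda>w. Re (f w)) z *\<^sub>R fst (\<omega> (f z)) + pdx (\<lambda>w. Im (f w)) z *\<^sub>R snd (\<omega> (f z)),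
      pdy (\<lambda>w. Re (f w)) z *\<^sub>R fst (\<omega> (f z)) + pdy (\<lambda>w. Im (f w)) z *\<^sub>R snd (\<omega> (f z)))"

definition mat2 :: "complex \<Rightarrow> complex \<Rightarrow> complex \<Rightarrow> complex \<Rightarrow> complex^2^2" where
  "mat2 a b c d = (\<chi> i j. if i = 1 then (if j = 1 then a else b) else (if j = 1 then c else d))"
definition cmscale :: "complex \<Rightarrow> complex^2^2 \<Rightarrow> complex^2^2" where
  "cmscale c M = (\<chi> i j. c * M $ i $ j)"

definition t0 :: "complex^2^2" where
  "t0 = cmscale (- \<i> / 2) (mat2 1 0 0 (-1))"
definition t1 :: "real \<Rightarrow> complex^2^2" where
  "t1 lam = cmscale (- \<i> / 2) (mat2 0 (- complex_of_real lam) 1 0)"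
definition t2 :: "real \<Rightarrow> complex^2^2" where
  "t2 lam = cmscale (1 / 2) (mat2 0 (complex_of_real lam) 1 0)"
definition tp :: "real \<Rightarrow> complex^2^2" where
  "tp lam = t1 lam + cmscale \<i> (t2 lam)"
definition tm :: "real \<Rightarrow> complex^2^2" where
  "tm lam = t1 lam - cmscale \<i> (t2 lam)"

definition conn :: "real \<Rightarrow> complex form1 \<Rightarrow> complex form1 \<Rightarrow> (complex^2^2) form1" where
  "conn lam G E z =
    (let F = (\<lambda>g e. cmscale (- g) t0
                     + cmscale (\<i> / 2) (cmscale e (tm lam) - cmscale (cnj e) (tp lam)))
     in (F (fst (G z)) (fst (E z)), F (snd (G z)) (snd (E z))))"

end

theory Submission
  imports Defs
begin

lemma pdx_at: "(f has_derivative f') (at z) \<Longrightarrow> pdx f z = f' 1"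
  unfolding pdx_def using frechet_derivative_at by metis
lemma pdy_at: "(f has_derivative f') (at z) \<Longrightarrow> pdy f z = f' \<i>"
  unfolding pdy_def using frechet_derivative_at by metis

lemma hd: "f differentiable (at z) \<Longrightarrow> (f has_derivative frechet_derivative f (at z)) (at z)"
  using frechet_derivative_works by blast

context fixes z :: complex begin

lemma pdx_add[simp]: fixes f g :: "complex \<Rightarrow> 'a::real_normed_vector"
  assumes "f differentiable (at z)" "g differentiable (at z)"
  shows "pdx (\<lambda>w. f w + g w) z = pdx f z + pdx g z"
  using pdx_at[OF has_derivative_add[OF hd[OF assms(1)] hd[OF assms(2)]]] by (simp add: pdx_def)
lemma pdy_add[simp]: fixes f g :: "complex \<Rightarrow> 'a::real_normed_vector"
  assumes "f differentiable (at z)" "g differentiable (at z)"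
  shows "pdy (\<lambda>w. f w + g w) z = pdy f z + pdy g z"
  using pdy_at[OF has_derivative_add[OF hd[OF assms(1)] hd[OF assms(2)]]] by (simp add: pdy_def)
lemma pdx_diff[simp]: fixes f g :: "complex \<Rightarrow> 'a::real_normed_vector"
  assumes "f differentiable (at z)" "g differentiable (at z)"
  shows "pdx (\<lambda>w. f w - g w) z = pdx f z - pdx g z"
  using pdx_at[OF has_derivative_diff[OF hd[OF assms(1)] hd[OF assms(2)]]] by (simp add: pdx_def)
lemma pdy_diff[simp]: fixes f g :: "complex \<Rightarrow> 'a::real_normed_vector"
  assumes "f differentiable (at z)" "g differentiable (at z)"
  shows "pdy (\<lambda>w. f w - g w) z = pdy f z - pdy g z"
  using pdy_at[OF has_derivative_diff[OF hd[OF assms(1)] hd[OF assms(2)]]] by (simp add: pdy_def)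
lemma pdx_minus[simp]: fixes f :: "complex \<Rightarrow> 'a::real_normed_vector"
  assumes "f differentiable (at z)"
  shows "pdx (\<lambda>w. - f w) z = - pdx f z"
  using pdx_at[OF has_derivative_minus[OF hd[OF assms(1)]]] by (simp add: pdx_def)
lemma pdy_minus[simp]: fixes f :: "complex \<Rightarrow> 'a::real_normed_vector"
  assumes "f differentiable (at z)"
  shows "pdy (\<lambda>w. - f w) z = - pdy f z"
  using pdy_at[OF has_derivative_minus[OF hd[OF assms(1)]]] by (simp add: pdy_def)
lemma pdx_mult[simp]: fixes f g :: "complex \<Rightarrow> complex"
  assumes "f differentiable (at z)" "g differentiable (at z)"
  shows "pdx (\<lambda>w. f w * g w) z = pdx f z * g z + f z * pdx g z"
  using pdx_at[OF has_derivative_mult[OF hd[OF assms(1)] hd[OF assms(2)]]] by (simp add: pdx_def)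
lemma pdy_mult[simp]: fixes f g :: "complex \<Rightarrow> complex"
  assumes "f differentiable (at z)" "g differentiable (at z)"
  shows "pdy (\<lambda>w. f w * g w) z = pdy f z * g z + f z * pdy g z"
  using pdy_at[OF has_derivative_mult[OF hd[OF assms(1)] hd[OF assms(2)]]] by (simp add: pdy_def)
lemma pdx_inverse[simp]: fixes f :: "complex \<Rightarrow> complex"
  assumes "f differentiable (at z)" "f z \<noteq> 0"
  shows "pdx (\<lambda>w. inverse (f w)) z = - (inverse (f z) * pdx f z * inverse (f z))"
  using pdx_at[OF Deriv.has_derivative_inverse[OF assms(2) hd[OF assms(1)]]] by (simp add: pdx_def)
lemma pdy_inverse[simp]: fixes f :: "complex \<Rightarrow> complex"
  assumes "f differentiable (at z)" "f z \<noteq> 0"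
  shows "pdy (\<lambda>w. inverse (f w)) z = - (inverse (f z) * pdy f z * inverse (f z))"
  using pdy_at[OF Deriv.has_derivative_inverse[OF assms(2) hd[OF assms(1)]]] by (simp add: pdy_def)
lemma pdx_const[simp]: "pdx (\<lambda>w. c) z = 0"
  using pdx_at[OF has_derivative_const[of c "at z"]] by simp
lemma pdy_const[simp]: "pdy (\<lambda>w. c) z = 0"
  using pdy_at[OF has_derivative_const[of c "at z"]] by simp
lemma pdx_id[simp]: "pdx (\<lambda>w. w) z = 1"
  using pdx_at[OF has_derivative_ident] by simp
lemma pdy_id[simp]: "pdy (\<lambda>w. w) z = \<i>"
  using pdy_at[OF has_derivative_ident] by simp
lemma pdx_blin: assumes "bounded_linear L" "f differentiable (at z)" shows "pdx (\<lambda>w. L (f w)) z = L (pdx f z)"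
  using pdx_at[OF bounded_linear.has_derivative[OF assms(1) hd[OF assms(2)]]] by (simp add: pdx_def)
lemma pdy_blin: assumes "bounded_linear L" "f differentiable (at z)" shows "pdy (\<lambda>w. L (f w)) z = L (pdy f z)"
  using pdy_at[OF bounded_linear.has_derivative[OF assms(1) hd[OF assms(2)]]] by (simp add: pdy_def)
lemma pdx_cnj[simp]: "f differentiable (at z) \<Longrightarrow> pdx (\<lambda>w. cnj (f w)) z = cnj (pdx f z)"
  by (rule pdx_blin[OF bounded_linear_cnj])
lemma pdy_cnj[simp]: "f differentiable (at z) \<Longrightarrow> pdy (\<lambda>w. cnj (f w)) z = cnj (pdy f z)"
  by (rule pdy_blin[OF bounded_linear_cnj])
lemma diff_cnj[simp]: "f differentiable (at z) \<Longrightarrow> (\<lambda>w. cnj (f w)) differentiable (at z)"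
  using differentiable_chain_at[OF _ bounded_linear_imp_differentiable[OF bounded_linear_cnj]] unfolding o_def .

lemma mat2_blin: "bounded_linear (\<lambda>(p::complex,q::complex,r::complex,s::complex). mat2 p q r s)"
proof -
  have "linear (\<lambda>(p::complex,q::complex,r::complex,s::complex). mat2 p q r s)"
    by (rule linearI) (auto simp: mat2_def vec_eq_iff algebra_simps)
  then show ?thesis using linear_conv_bounded_linear by blast
qed

lemma pdx_mat2[simp]:
  assumes "p differentiable (at z)" "q differentiable (at z)" "r differentiable (at z)" "s differentiable (at z)"
  shows "pdx (\<lambda>w. mat2 (p w) (q w) (r w) (s w)) z = mat2 (pdx p z) (pdx q z) (pdx r z) (pdx s z)"
  using pdx_at[OF bounded_linear.has_derivative[OF mat2_blin has_derivative_Pair[OF hd[OF assms(1)] has_derivative_Pair[OF hd[OF assms(2)] has_derivative_Pair[OF hd[OF assms(3)] hd[OF assms(4)]]]]]]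
  by (simp add: pdx_def)
lemma pdy_mat2[simp]:
  assumes "p differentiable (at z)" "q differentiable (at z)" "r differentiable (at z)" "s differentiable (at z)"
  shows "pdy (\<lambda>w. mat2 (p w) (q w) (r w) (s w)) z = mat2 (pdy p z) (pdy q z) (pdy r z) (pdy s z)"
  using pdy_at[OF bounded_linear.has_derivative[OF mat2_blin has_derivative_Pair[OF hd[OF assms(1)] has_derivative_Pair[OF hd[OF assms(2)] has_derivative_Pair[OF hd[OF assms(3)] hd[OF assms(4)]]]]]]
  by (simp add: pdy_def)

lemma diff_ofreal_fst: "(a::complex \<Rightarrow> real \<times> real) differentiable (at z) \<Longrightarrow> (\<lambda>w. complex_of_real (fst (a w))) differentiable (at z)"
proof -
  have "bounded_linear (\<lambda>p::real\<times>real. complex_of_real (fst p))"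
    using bounded_linear_compose[OF bounded_linear_of_real bounded_linear_fst] by (simp add: o_def)
  then show "a differentiable (at z) \<Longrightarrow> ?thesis"
    using differentiable_chain_at[OF _ bounded_linear_imp_differentiable] unfolding o_def by blast
qed
lemma diff_ofreal_snd: "(a::complex \<Rightarrow> real \<times> real) differentiable (at z) \<Longrightarrow> (\<lambda>w. complex_of_real (snd (a w))) differentiable (at z)"
proof -
  have "bounded_linear (\<lambda>p::real\<times>real. complex_of_real (snd p))"
    using bounded_linear_compose[OF bounded_linear_of_real bounded_linear_snd] by (simp add: o_def)
  then show "a differentiable (at z) \<Longrightarrow> ?thesis"
    using differentiable_chain_at[OF _ bounded_linear_imp_differentiable] unfolding o_def by blast
qed
end

definition FF :: "real \<Rightarrow> complex \<Rightarrow> complex \<Rightarrow> complex^2^2" where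
  "FF lam g e = mat2 (\<i> * g / 2) (complex_of_real lam * cnj e / 2) (e / 2) (- \<i> * g / 2)"

lemma ii1: "\<i> * (x * (\<i> * y)) = - (x * y)" by (simp add: mult.left_commute)
lemma ii2: "\<i> * (x * \<i>) = - x" by (simp add: mult.commute)
lemma conn_eq: "conn lam G E z = (FF lam (fst (G z)) (fst (E z)), FF lam (snd (G z)) (snd (E z)))"
  apply (simp add: conn_def FF_def t0_def tm_def tp_def t1_def t2_def mat2_def cmscale_def vec_eq_iff forall_2 Let_def)
  apply (simp add: ii1 ii2)
  done

lemma FF_lin: "r *\<^sub>R FF lam g1 e1 + s *\<^sub>R FF lam g2 e2 = FF lam (r *\<^sub>R g1 + s *\<^sub>R g2) (r *\<^sub>R e1 + s *\<^sub>R e2)"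
  by (simp add: FF_def mat2_def vec_eq_iff forall_2) (simp add: scaleR_conv_of_real field_simps)

lemma mat2_eq0: "mat2 a b c d = 0 \<longleftrightarrow> a = 0 \<and> b = 0 \<and> c = 0 \<and> d = 0"
  by (auto simp: mat2_def vec_eq_iff forall_2)
lemma mat2_mult: "mat2 a b c d ** mat2 a' b' c' d' = mat2 (a*a'+b*c') (a*b'+b*d') (c*a'+d*c') (c*b'+d*d')"
  by (simp add: mat2_def matrix_matrix_mult_def vec_eq_iff forall_2 UNIV_2)
lemma mat2_diff: "mat2 a b c d - mat2 a' b' c' d' = mat2 (a-a') (b-b') (c-c') (d-d')"
  by (simp add: mat2_def vec_eq_iff forall_2)
lemma mat2_add: "mat2 a b c d + mat2 a' b' c' d' = mat2 (a+a') (b+b') (c+c') (d+d')"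
  by (simp add: mat2_def vec_eq_iff forall_2)


lemma pullback_conn: "pullback f (conn lam G E) z = conn lam (pullback f G) (pullback f E) z"
  by (simp add: pullback_def conn_eq FF_lin)

lemma part1:
  assumes "\<forall>z\<in>U. pullback f (coframe (- lam)) z = fscale \<phi> (coframe (- lam0)) z"
    and "\<forall>z\<in>U. cform a z = fsub (pullback f (spin (- lam))) (spin (- lam0)) z"
  shows "\<forall>z\<in>U. pullback f (conn lam (spin (- lam)) (coframe (- lam))) z
                    = conn lam (fadd (cform a) (spin (- lam0))) (fscale \<phi> (coframe (- lam0))) z"
proof
  fix z assume z: "z \<in> U"
  have 1: "pullback f (spin (- lam)) z = fadd (cform a) (spin (- lam0)) z"
  proof -
    have "cform a z = fsub (pullback f (spin (- lam))) (spin (- lam0)) z" using assms(2) z by blast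
    then show ?thesis unfolding fsub_def fadd_def by (simp add: prod_eq_iff)
  qed
  have 2: "pullback f (coframe (- lam)) z = fscale \<phi> (coframe (- lam0)) z" using assms(1) z by blast
  show "pullback f (conn lam (spin (- lam)) (coframe (- lam))) z = conn lam (fadd (cform a) (spin (- lam0))) (fscale \<phi> (coframe (- lam0))) z" unfolding pullback_conn conn_eq 1 2 ..
qed


lemma pdx_divide[simp]: fixes f g :: "complex \<Rightarrow> complex"
  assumes "f differentiable (at z)" "g differentiable (at z)" "g z \<noteq> 0"
  shows "pdx (\<lambda>w. f w / g w) z = (pdx f z * g z - f z * pdx g z) / (g z * g z)"
proof -
  have e: "(\<lambda>w. f w / g w) = (\<lambda>w. f w * inverse (g w))" by (simp add: divide_inverse)
  have gi: "(\<lambda>w. inverse (g w)) differentiable (at z)" using differentiable_inverse[OF assms(2,3)] .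
  have "pdx (\<lambda>w. f w * inverse (g w)) z = pdx f z * inverse (g z) + f z * (- (inverse (g z) * pdx g z * inverse (g z)))"
    using pdx_mult[OF assms(1) gi] pdx_inverse[OF assms(2,3)] by simp
  then show ?thesis unfolding e using assms(3) by (simp add: field_simps)
qed
lemma pdy_divide[simp]: fixes f g :: "complex \<Rightarrow> complex"
  assumes "f differentiable (at z)" "g differentiable (at z)" "g z \<noteq> 0"
  shows "pdy (\<lambda>w. f w / g w) z = (pdy f z * g z - f z * pdy g z) / (g z * g z)"
proof -
  have e: "(\<lambda>w. f w / g w) = (\<lambda>w. f w * inverse (g w))" by (simp add: divide_inverse)
  have gi: "(\<lambda>w. inverse (g w)) differentiable (at z)" using differentiable_inverse[OF assms(2,3)] .
  have "pdy (\<lambda>w. f w * inverse (g w)) z = pdy f z * inverse (g z) + f z * (- (inverse (g z) * pdy g z * inverse (g z)))"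
    using pdy_mult[OF assms(1) gi] pdy_inverse[OF assms(2,3)] by simp
  then show ?thesis unfolding e using assms(3) by (simp add: field_simps)
qed

definition Dn :: "real \<Rightarrow> complex \<Rightarrow> complex" where
  "Dn K w = 1 + complex_of_real K * (w * cnj w)"

lemma Dn_eq: "complex_of_real (1 + K * (cmod w)^2) = Dn K w"
  by (simp add: Dn_def flip: complex_norm_square)

lemma coframe_eq: "coframe K = (\<lambda>w. (2 / Dn K w, 2 / Dn K w * \<i>))"
  by (rule ext) (unfold coframe_def fscale_def dz_form_def Dn_eq, simp)
lemma spin_eq: "spin K = (\<lambda>w. (\<i> * complex_of_real K / Dn K w * (w - cnj w),
                               \<i> * complex_of_real K / Dn K w * (- \<i> * w - cnj w * \<i>)))"
  by (rule ext) (unfold spin_def fscale_def fsub_def dz_form_def dzbar_form_def Dn_eq, simp add: algebra_simps)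

lemma Dn_diff[simp]: "(\<lambda>w. Dn K w) differentiable (at z)"
  unfolding Dn_def by simp
lemma pdx_Dn[simp]: "pdx (\<lambda>w. Dn K w) z = complex_of_real K * (z + cnj z)"
  unfolding Dn_def by (simp add: algebra_simps)
lemma pdy_Dn[simp]: "pdy (\<lambda>w. Dn K w) z = complex_of_real K * (\<i> * cnj z - \<i> * z)"
  unfolding Dn_def by (simp add: algebra_simps)

lemma mat2_inj: "mat2 a b c d = mat2 a' b' c' d' \<longleftrightarrow> a = a' \<and> b = b' \<and> c = c' \<and> d = d'"
  by (auto simp: mat2_def vec_eq_iff forall_2)
lemma cnj_Dn: "cnj (Dn K z) = Dn K z" by (simp add: Dn_def mult.commute)
lemma cmod_sq: "(complex_of_real (cmod x))^2 = x * cnj x" by (simp flip: complex_norm_square)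

lemma part2_pt:
  fixes K lam :: real and \<phi> :: "complex \<Rightarrow> complex" and a :: "real form1"
  assumes D: "1 + K * (cmod z)^2 > 0" and dphi: "\<phi> differentiable (at z)" and da: "a differentiable (at z)"
  shows "dform (conn lam (fadd (cform a) (spin K)) (fscale \<phi> (coframe K))) z
          + mwedge (conn lam (fadd (cform a) (spin K)) (fscale \<phi> (coframe K))) (conn lam (fadd (cform a) (spin K)) (fscale \<phi> (coframe K))) z
       = mat2 (\<i>/2 * (dform (cform a) z - complex_of_real (- K - lam * (cmod (\<phi> z))^2) * kahler K z))
              (complex_of_real lam / 2 * cnj (wedge (fsub (dfun \<phi>) (fscale (\<lambda>w. \<i> * \<phi> w) (cform a))) (coframe K) z))
              (wedge (fsub (dfun \<phi>) (fscale (\<lambda>w. \<i> * \<phi> w) (cform a))) (coframe K) z / 2)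
              (- \<i>/2 * (dform (cform a) z - complex_of_real (- K - lam * (cmod (\<phi> z))^2) * kahler K z))"
proof -
  have Dz: "Dn K z \<noteq> 0" using D Dn_eq[of K z] by (metis less_irrefl of_real_eq_0_iff)
  have d1: "(\<lambda>w. complex_of_real (fst (a w))) differentiable (at z)" using diff_ofreal_fst[OF da] .
  have d2: "(\<lambda>w. complex_of_real (snd (a w))) differentiable (at z)" using diff_ofreal_snd[OF da] .
  show ?thesis
    apply (simp add: dform_def mwedge_def conn_eq FF_def fadd_def cform_def fscale_def coframe_eq spin_eq
       wedge_def fsub_def dfun_def kahler_def fconj_def mat2_mult mat2_diff mat2_add Dz d1 d2 dphi)
    apply (simp only: mat2_inj cnj_Dn cmod_sq)
    apply (intro conjI)
       apply (simp_all add: field_simps Dz)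
       apply (simp_all add: Dn_def algebra_simps)
    done
qed

theorem corollary3p2:
  fixes lam0 lam :: real and U :: "complex set" and f :: "complex \<Rightarrow> complex"
  assumes lam0: "lam0 \<in> {-1, 0, 1}" and lam: "lam \<in> {-1, 0, 1}"
    and U: "open U" "\<forall>z\<in>U. 1 + (- lam0) * (cmod z)^2 > 0"
  shows
    "(\<forall>(\<phi> :: complex \<Rightarrow> complex) (a :: real form1).
        f holomorphic_on U
        \<longrightarrow> (\<forall>z\<in>U. 1 + (- lam) * (cmod (f z))^2 > 0)
        \<longrightarrow> (\<forall>z\<in>U. pullback f (coframe (- lam)) z = fscale \<phi> (coframe (- lam0)) z)
        \<longrightarrow> (\<forall>z\<in>U. cform a z = fsub (pullback f (spin (- lam))) (spin (- lam0)) z)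
        \<longrightarrow> (\<forall>z\<in>U. pullback f (conn lam (spin (- lam)) (coframe (- lam))) z
                    = conn lam (fadd (cform a) (spin (- lam0))) (fscale \<phi> (coframe (- lam0))) z))
     \<and>
     (\<forall>(\<phi> :: complex \<Rightarrow> complex) (a :: real form1).
        (\<forall>z\<in>U. \<phi> differentiable (at z) \<and> a differentiable (at z))
        \<longrightarrow> ((\<forall>z\<in>U. flat_at (conn lam (fadd (cform a) (spin (- lam0))) (fscale \<phi> (coframe (- lam0)))) z)
             \<longleftrightarrow>
             (\<forall>z\<in>U.
                wedge (fsub (dfun \<phi>) (fscale (\<lambda>w. \<i> * \<phi> w) (cform a))) (coframe (- lam0)) z = 0
              \<and> dform (cform a) z
                  = complex_of_real (lam0 - lam * (cmod (\<phi> z))^2) * kahler (- lam0) z)))"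
proof (intro conjI allI impI)
  fix \<phi> :: "complex \<Rightarrow> complex" and a :: "real form1"
  assume "\<forall>z\<in>U. pullback f (coframe (- lam)) z = fscale \<phi> (coframe (- lam0)) z"
    "\<forall>z\<in>U. cform a z = fsub (pullback f (spin (- lam))) (spin (- lam0)) z"
  then show "\<forall>z\<in>U. pullback f (conn lam (spin (- lam)) (coframe (- lam))) z
                    = conn lam (fadd (cform a) (spin (- lam0))) (fscale \<phi> (coframe (- lam0))) z"
    by (rule part1)
next
  fix \<phi> :: "complex \<Rightarrow> complex" and a :: "real form1"
  assume d: "\<forall>z\<in>U. \<phi> differentiable (at z) \<and> a differentiable (at z)"
  have pt: "flat_at (conn lam (fadd (cform a) (spin (- lam0))) (fscale \<phi> (coframe (- lam0)))) z \<longleftrightarrow>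
             (wedge (fsub (dfun \<phi>) (fscale (\<lambda>w. \<i> * \<phi> w) (cform a))) (coframe (- lam0)) z = 0
              \<and> dform (cform a) z
                  = complex_of_real (lam0 - lam * (cmod (\<phi> z))^2) * kahler (- lam0) z)" if z: "z \<in> U" for z
  proof -
    have D: "1 + (- lam0) * (cmod z)^2 > 0" using U(2) z by blast
    show ?thesis
      unfolding flat_at_def part2_pt[OF D, of \<phi> a lam, simplified, OF conjunct1[OF d[rule_format, OF z]] conjunct2[OF d[rule_format, OF z]]]
      by (auto simp: mat2_eq0)
  qed
  show "(\<forall>z\<in>U. flat_at (conn lam (fadd (cform a) (spin (- lam0))) (fscale \<phi> (coframe (- lam0)))) z) \<longleftrightarrow>
        (\<forall>z\<in>U. wedge (fsub (dfun \<phi>) (fscale (\<lambda>w. \<i> * \<phi> w) (cform a))) (coframe (- lam0)) z = 0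
              \<and> dform (cform a) z
                  = complex_of_real (lam0 - lam * (cmod (\<phi> z))^2) * kahler (- lam0) z)"
    using pt by blast
qed

end
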